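(* For all $\vec v\in\hat N^n,\vec w\in\hat N^m$ with $n,m\ge1$, writing $\vec v=\vec v_l\vee\vec v_r$ and $\vec w=\vec w_l\vee\vec w_r$, the set $I=\{\vec u\in\hat N^{n+m}:\vec v\nearrow\vec w\le\vec u\le\vec v\nwarrow\vec w\}$ is the disjoint union of $I_1=\{\vec u:\ \vec v_l\vee(\vec v_r\nearrow\vec w)\le\vec u\le\vec v\nwarrow\vec w\}$ and $I_2=\{\vec u:\ \vec v\nearrow\vec w\le\vec u\le(\vec v\nwarrow\vec w_l)\vee\vec w_r\}$. Equivalently, $\vec v\star\vec w=\vec v_l\vee(\vec v_r\star\vec w)+(\vec v\star\vec w_l)\vee\vec w_r$, where $\vee$ is extended bilinearly, and $I_1$ (resp. $I_2$) is the set of trees appearing in the first (resp. second) summand.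
   Context: $\hat N^0=\{()\}$ (empty vector) and, for $n\ge1$, $\hat N^n$ is the set of names of planar rooted binary trees with $n$ internal vertices; every element of $\hat N^n$, $n\ge1$, is uniquely $\vec v_l\vee\vec v_r:=(\vec v_l,1,p+1+\vec v_r)$ with $\vec v_l\in\hat N^p,\vec v_r\in\hat N^q$, $p+q+1=n$, where $k+(w_1,\dots,w_q)=(w_1+k,\dots,w_q+k)$ (so $\vec v\vee()=(\vec v,1)$, $()\vee\vec v=(1,1+\vec v)$, $()\vee()=(1)$). For $\vec v\in\hat N^n,\vec w\in\hat N^m$: $\vec v\nearrow\vec w=(\vec v,n\triangleright w_1,\dots,n\triangleright w_m)$ with $n\triangleright a=a+n$ for $a\neq1$, $n\triangleright1=1$; $\vec v\nwarrow\vec w=(\vec v,n+\vec w)$; $()$ is a unit for both. Componentwise order $\le$. On $K\hat N^\infty_*=\bigoplus_{n\ge1}K\hat N^n$ ($K$ a field of characteristic zero), $\vec v\star\vec w$ is the sum of all $\vec t\in\hat N^{n+m}$ with $\vec v\nearrow\vec w\le\vec t\le\vec v\nwarrow\vec w$, and $()\star\vec v=\vec v\star()=\vec v$. *)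

theory Defs
  imports Main
begin

datatype bintree = Lf | Nd bintree bintree

fun internal :: "bintree \<Rightarrow> nat" where
  "internal Lf = 0"
| "internal (Nd l r) = internal l + internal r + 1"

definition vee :: "nat list \<Rightarrow> nat list \<Rightarrow> nat list" where
  "vee vl vr = vl @ [1] @ map (\<lambda>a. a + (length vl + 1)) vr"

fun tname :: "bintree \<Rightarrow> nat list" where
  "tname Lf = []"
| "tname (Nd l r) = vee (tname l) (tname r)"

definition Nhat :: "nat \<Rightarrow> nat list set" where
  "Nhat n = {tname t | t. internal t = n}"

definition over :: "nat list \<Rightarrow> nat list \<Rightarrow> nat list" where
  "over v w = v @ map (\<lambda>a. if a = 1 then 1 else a + length v) w"

definition under :: "nat list \<Rightarrow> nat list \<Rightarrow> nat list" where
  "under v w = v @ map (\<lambda>a. a + length v) w"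

definition vle :: "nat list \<Rightarrow> nat list \<Rightarrow> bool" where
  "vle u v \<longleftrightarrow> length u = length v \<and> (\<forall>i < length u. u ! i \<le> v ! i)"

end

theory Submission imports Defs begin

lemma len_vee[simp]: "length (vee a b) = length a + length b + 1"
  by (simp add: vee_def)

lemma vee_nth: "i < length (vee a b) \<Longrightarrow> vee a b ! i =
  (if i < length a then a!i else if i = length a then 1 else b!(i - length a - 1) + (length a + 1))"
  by (auto simp: vee_def nth_append nth_Cons' )

definition nest :: "nat list \<Rightarrow> bool" where
  "nest u \<longleftrightarrow> (\<forall>i<length u. 1 \<le> u!i \<and> (\<forall>j<i. u!i \<le> Suc j \<longrightarrow> u!i \<le> u!j))"

lemma nest_vee: assumes a: "nest a" and b: "nest b" shows "nest (vee a b)"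
  unfolding nest_def
proof (intro allI impI conjI)
  fix i assume i: "i < length (vee a b)"
  let ?k = "length a"
  show "1 \<le> vee a b ! i" using i a b by (auto simp: vee_nth nest_def)
  fix j assume j: "j < i" and le: "vee a b ! i \<le> Suc j"
  show "vee a b ! i \<le> vee a b ! j"
  proof (cases "i < ?k")
    case True then show ?thesis using i j le a by (auto simp: vee_nth nest_def)
  next
    case False
    show ?thesis
    proof (cases "i = ?k")
      case True then show ?thesis using i j le a by (auto simp: vee_nth nest_def)
    next
      case False2: False
      have bi: "1 \<le> b!(i - ?k - 1)" using b i False False2 by (auto simp: nest_def)
      have ui: "vee a b ! i = b!(i - ?k - 1) + (?k + 1)" using i False False2 by (simp add: vee_nth)
      have jk: "j > ?k" using ui bi le by linarith
      have uj: "vee a b ! j = b!(j - ?k - 1) + (?k + 1)" using i j jk by (simp add: vee_nth)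
      have i': "i - ?k - 1 < length b" using i j jk by simp
      have j': "j - ?k - 1 < i - ?k - 1" using j jk by simp
      have l': "b!(i - ?k - 1) \<le> Suc (j - ?k - 1)" using le ui jk by simp
      have "b!(i - ?k - 1) \<le> b!(j - ?k - 1)"
        using b i' j' l' unfolding nest_def by blast
      then show ?thesis using ui uj by simp
    qed
  qed
qed

lemma nest_Nil: "nest []" by (simp add: nest_def)

lemma tname_prop: "length (tname t) = internal t \<and> nest (tname t)"
  by (induction t) (auto simp: nest_vee nest_Nil)

lemma Nhat_prop: "u \<in> Nhat k \<Longrightarrow> length u = k \<and> nest u"
  using tname_prop unfolding Nhat_def by auto

theorem mainTheorem11:
  fixes v w vl vr wl wr :: "nat list" and n m p q p' q' :: nat
  assumes "n \<ge> 1" and "m \<ge> 1"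
    and "v \<in> Nhat n" and "w \<in> Nhat m"
    and "vl \<in> Nhat p" and "vr \<in> Nhat q" and "v = vee vl vr"
    and "wl \<in> Nhat p'" and "wr \<in> Nhat q'" and "w = vee wl wr"
  shows "{u \<in> Nhat (n + m). vle (over v w) u \<and> vle u (under v w)}
           = {u \<in> Nhat (n + m). vle (vee vl (over vr w)) u \<and> vle u (under v w)}
             \<union> {u \<in> Nhat (n + m). vle (over v w) u \<and> vle u (vee (under v wl) wr)}
     \<and> {u \<in> Nhat (n + m). vle (vee vl (over vr w)) u \<and> vle u (under v w)}
       \<inter> {u \<in> Nhat (n + m). vle (over v w) u \<and> vle u (vee (under v wl) wr)} = {}"
proof -
  note P = Nhat_prop[OF assms(3)] Nhat_prop[OF assms(4)] Nhat_prop[OF assms(5)]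
    Nhat_prop[OF assms(6)] Nhat_prop[OF assms(8)] Nhat_prop[OF assms(9)]
  have ln: "length v = n" "length w = m" "length vl = p" "length vr = q" "length wl = p'" "length wr = q'"
    using P by auto
  have nn: "n = p + q + 1" using ln assms(7) by simp
  have mm: "m = p' + q' + 1" using ln assms(10) by simp
  have nw: "nest w" and nv: "nest v" using P by auto
  have wpos: "k < m \<Longrightarrow> 1 \<le> w!k" for k using nw ln unfolding nest_def by auto
  define f where "f = (\<lambda>a::nat. if a = 1 then 1 else a + n)"
  define h where "h = (\<lambda>a::nat. if a = 1 then p + 2 else a + n)"
  define r where "r = n + p'"
  define L where "L = over v w"
  define L1 where "L1 = vee vl (over vr w)"
  define U where "U = under v w"
  define U2 where "U2 = vee (under v wl) wr"
  have hL: "L = v @ map f w" unfolding L_def over_def f_def using ln by simp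
  have hL1: "L1 = v @ map h w" unfolding L1_def over_def h_def assms(7) vee_def using ln nn
    by (simp add: fun_eq_iff)
  have hU: "U = v @ map (\<lambda>a. a + n) w" unfolding U_def under_def using ln by simp
  have hU2: "U2 = U[r := 1]" unfolding U2_def U_def under_def vee_def r_def assms(10) using ln
    by (simp add: list_update_append)
  have lens: "length L = n + m" "length L1 = n + m" "length U = n + m" "length U2 = n + m"
    using hL hL1 hU hU2 ln by auto
  have F2: "L1!i = (if n \<le> i \<and> L!i = 1 then p+2 else L!i)" if "i < n + m" for i
  proof (cases "i < n")
    case True then show ?thesis using ln hL hL1 by (simp add: nth_append)
  next
    case False
    then have "1 \<le> w!(i-n)" using wpos that by simp
    then show ?thesis using False that ln hL hL1 by (auto simp: nth_append f_def h_def)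
  qed
  have F3: "U2!i = (if i = r then 1 else U!i)" if "i < n + m" for i
    using that lens hU2 by simp
  have wle: "k \<le> p'" if "k < m" "w!k = 1" for k
  proof (rule ccontr)
    assume "\<not> k \<le> p'"
    then have "w!k = wr!(k - p' - 1) + (p' + 1)" using that ln assms(10) by (simp add: vee_nth)
    moreover have "1 \<le> wr!(k - p' - 1)" using P that \<open>\<not> k \<le> p'\<close> ln mm unfolding nest_def by auto
    ultimately show False using that(2) by linarith
  qed
  have FU0: "w!(i-n) = 1" if "i < n + m" "n \<le> i" "L!i = 1" for i
  proof -
    have "f (w!(i-n)) = 1" using that hL ln by (simp add: nth_append)
    moreover have "1 \<le> w!(i-n)" using wpos[of "i-n"] that by simp
    ultimately show "w!(i-n) = 1" using \<open>n \<ge> 1\<close> unfolding f_def by (cases "w!(i-n) = 1") auto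
  qed
  have FU: "U!i = n + 1 \<and> i \<le> r" if "i < n + m" "n \<le> i" "L!i = 1" for i
  proof -
    have "w!(i-n) = 1" using FU0 that .
    moreover have "U!i = w!(i-n) + n" using hU ln that by (simp add: nth_append)
    moreover have "i - n \<le> p'" using wle[of "i-n"] that calculation(1) by simp
    ultimately show ?thesis using r_def that by simp
  qed
  have vp: "v!p = 1" using assms(7) ln by (simp add: vee_nth)
  have Fp: "L!p = 1" "U!p = 1" using vp hL hU ln nn by (auto simp: nth_append)
  have rlt: "r < n + m" "p < r" "n \<le> r" using r_def mm nn by auto
  have Lr: "L!r = 1" and Ur: "U!r = n + 1"
  proof -
    have "w!p' = 1" using assms(10) ln by (simp add: vee_nth)
    then show "L!r = 1" "U!r = n + 1" using hL hU ln r_def mm by (auto simp: nth_append f_def)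
  qed
  have key: "(vle L u \<and> vle u U) = ((vle L1 u \<and> vle u U) \<or> (vle L u \<and> vle u U2))
     \<and> \<not> ((vle L1 u \<and> vle u U) \<and> (vle L u \<and> vle u U2))" if u: "u \<in> Nhat (n + m)" for u
  proof -
    have lu: "length u = n + m" and nu: "nest u" using Nhat_prop[OF u] by auto
    have L_L1: "L!i \<le> L1!i" if "i < n+m" for i using F2[OF that] FU[OF that] nn by auto
    have U2_U: "U2!i \<le> U!i" if "i < n+m" for i using F3[OF that] FU[OF that] Lr Ur by auto
    have A: "vle L1 u" if b: "vle L u" "vle u U" and ur: "u!r \<noteq> 1"
    proof -
      have up: "u!p = 1" using b Fp lens lu rlt unfolding vle_def by (metis le_antisym less_trans)
      have urU: "u!r \<le> n+1" using b Ur lens rlt unfolding vle_def by auto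
      have ur1: "1 \<le> u!r" using nu lu rlt unfolding nest_def by auto
      have ur2: "p + 2 \<le> u!r"
      proof (rule ccontr)
        assume "\<not> p + 2 \<le> u!r"
        then have "u!r \<le> u!p" using nu lu rlt unfolding nest_def by auto
        then show False using up ur ur1 by simp
      qed
      show ?thesis unfolding vle_def
      proof (intro conjI allI impI)
        show "length L1 = length u" using lens lu by simp
        fix i assume i: "i < length L1"
        show "L1!i \<le> u!i"
        proof (cases "n \<le> i \<and> L!i = 1")
          case False then show ?thesis using F2[of i] i lens b unfolding vle_def by auto
        next
          case True
          have Ui: "U!i = n+1" "i \<le> r" using FU[of i] True i lens by auto
          show ?thesis
          proof (cases "i = r")
            case True then show ?thesis using ur2 F2[of r] rlt Lr by simp
          next
            case False
            with Ui have ir: "i < r" by simp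
            have ui1: "1 \<le> u!i" using nu lu i lens unfolding nest_def by auto
            have "p + 2 \<le> u!i"
            proof (rule ccontr)
              assume "\<not> p + 2 \<le> u!i"
              moreover have "p < i" using True nn by simp
              ultimately have "u!i \<le> u!p" using nu lu i lens unfolding nest_def by auto
              then have "u!i = 1" using up ui1 by simp
              moreover have "u!r \<le> Suc i" using urU True by simp
              ultimately have "u!r \<le> 1" using nu lu rlt ir unfolding nest_def by fastforce
              then show False using ur ur1 by simp
            qed
            then show ?thesis using F2[of i] i lens True by simp
          qed
        qed
      qed
    qed
    have B: "vle u U2" if b: "vle u U" and ur: "u!r = 1"
      unfolding vle_def using b ur F3 lens lu unfolding vle_def by auto
    have C: False if "vle L1 u" "vle u U2"
      using that F2[of r] F3[of r] Lr rlt lens unfolding vle_def by fastforce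
    have D1: "vle L u" if "vle L1 u" using that L_L1 lens unfolding vle_def by (metis le_trans)
    have D2: "vle u U" if "vle u U2" using that U2_U lens unfolding vle_def by (metis le_trans)
    show ?thesis using A B C D1 D2 by blast
  qed
  show ?thesis
    unfolding L_def[symmetric] L1_def[symmetric] U_def[symmetric] U2_def[symmetric]
  proof (intro conjI)
    have k1: "(vle L u \<and> vle u U) = ((vle L1 u \<and> vle u U) \<or> (vle L u \<and> vle u U2))"
      if "u \<in> Nhat (n + m)" for u using key[OF that] by (rule conjunct1)
    have k2: "\<not> ((vle L1 u \<and> vle u U) \<and> (vle L u \<and> vle u U2))"
      if "u \<in> Nhat (n + m)" for u using key[OF that] by (rule conjunct2)
    show "{u \<in> Nhat (n + m). vle L u \<and> vle u U} =
      {u \<in> Nhat (n + m). vle L1 u \<and> vle u U} \<union> {u \<in> Nhat (n + m). vle L u \<and> vle u U2}"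
    proof (rule set_eqI)
      fix u show "(u \<in> {u \<in> Nhat (n + m). vle L u \<and> vle u U}) =
        (u \<in> {u \<in> Nhat (n + m). vle L1 u \<and> vle u U} \<union> {u \<in> Nhat (n + m). vle L u \<and> vle u U2})"
        by (cases "u \<in> Nhat (n + m)") (simp_all only: k1 mem_Collect_eq Un_iff simp_thms)
    qed
    show "{u \<in> Nhat (n + m). vle L1 u \<and> vle u U} \<inter> {u \<in> Nhat (n + m). vle L u \<and> vle u U2} = {}"
      using k2 by blast
  qed
qed

end
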